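(* Let $V,W$ be finite-dimensional real vector spaces, $(S,t)$ a pointed topological space, and $\mathcal{U}\subset V\times S$ an open neighbourhood of $(0,t)$. Let $f:\mathcal{U}\to W$, $(q,s)\mapsto f_s(q)$, be such that $F:\mathcal{U}\to W\times S$, $F(q,s)=(f_s(q),s)$, is rel-$C^1$, with $f_t(0)=0$ and $df_t(0):V\to W$ an isomorphism. Then there exist open neighbourhoods $U\subset\mathcal{U}$ and $U'\subset W\times S$ of $(0,t)$ such that $F$ restricts to a bijection $U\to U'$ whose inverse $G$ is also rel-$C^1$. Moreover, if $2\le r\le\infty$ and $F$ is rel-$C^r$, then so is $G$.
   Context: For an open $\mathcal{U}\subset V\times S$, a map $\mathcal U\to W\times S$ of the form $(q,s)\mapsto(h(q,s),s)$ is rel-$C^0$ if continuous; rel-$C^r$ for $r\ge1$ if it is continuous, $q\mapsto h(q,s)$ is differentiable for each $s$, and $(q,v,s)\mapsto(h(q,s),D_qh(q,s)v,s)$ (on the corresponding open subset of $(V\times V)\times S$) is rel-$C^{r-1}$; rel-$C^\infty$ if rel-$C^r$ for all $r$. *)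

theory Defs
  imports "HOL-Analysis.Analysis" "HOL-Library.Extended_Nat"
begin

text \<open>Iterated directional Frechet derivative:
  dirD g [] = g,  dirD g (v # vs) q = D (dirD g vs) (q) v,
  i.e. dirD g [v_k,...,v_1] q = D^k g(q)(v_1,...,v_k).\<close>
fun dirD :: "('v::real_normed_vector \<Rightarrow> 'w::real_normed_vector) \<Rightarrow> 'v list \<Rightarrow> 'v \<Rightarrow> 'w" where
  "dirD g [] = g"
| "dirD g (v # vs) = (\<lambda>q. frechet_derivative (dirD g vs) (at q) v)"

definition relC :: "enat \<Rightarrow> (('v::euclidean_space) \<times> ('s::topological_space)) set
                     \<Rightarrow> ('v \<Rightarrow> 's \<Rightarrow> 'w::euclidean_space) \<Rightarrow> bool" where
  "relC r U h \<longleftrightarrow>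
     (\<forall>k::nat. enat k < r \<longrightarrow> (\<forall>vs. length vs = k \<longrightarrow>
        (\<forall>q s. (q, s) \<in> U \<longrightarrow> dirD (\<lambda>x. h x s) vs differentiable (at q)))) \<and>
     (\<forall>k::nat. enat k \<le> r \<longrightarrow> (\<forall>vs. length vs = k \<longrightarrow>
        continuous_on U (\<lambda>(q, s). dirD (\<lambda>x. h x s) vs q)))"

end

theory Submission
  imports Defs
begin
lemma dirD_append: "dirD g (vs @ [v]) = dirD (\<lambda>q. frechet_derivative g (at q) v) vs"
  by (induction vs) auto

lemma relC_0: "relC (enat 0) U h \<longleftrightarrow> continuous_on U (\<lambda>(q,s). h q s)"
  unfolding relC_def by auto

lemma relC_Suc:
  fixes h :: "'v::euclidean_space \<Rightarrow> 's::topological_space \<Rightarrow> 'w::euclidean_space" and U :: "('v \<times> 's) set"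
  shows "relC (enat (Suc n)) U h \<longleftrightarrow>
   continuous_on U (\<lambda>(q,s). h q s) \<and> (\<forall>q s. (q,s)\<in>U \<longrightarrow> (\<lambda>x. h x s) differentiable (at q)) \<and>
   (\<forall>v. relC (enat n) U (\<lambda>q s. frechet_derivative (\<lambda>x. h x s) (at q) v))"
proof
  assume H: "relC (enat (Suc n)) U h"
  have H1: "\<And>k vs q s. k < Suc n \<Longrightarrow> length vs = k \<Longrightarrow> (q,s) \<in> U \<Longrightarrow> dirD (\<lambda>x. h x s) vs differentiable (at q)"
    and H2: "\<And>k vs. k \<le> Suc n \<Longrightarrow> length vs = k \<Longrightarrow> continuous_on U (\<lambda>(q, s). dirD (\<lambda>x. h x s) vs q)"
    using H unfolding relC_def by auto
  have "continuous_on U (\<lambda>(q,s). h q s)" using H2[of 0 "[]"] by simp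
  moreover have "\<forall>q s. (q,s)\<in>U \<longrightarrow> (\<lambda>x. h x s) differentiable (at q)" using H1[of 0 "[]"] by simp
  moreover have "relC (enat n) U (\<lambda>q s. frechet_derivative (\<lambda>x. h x s) (at q) v)" for v
    unfolding relC_def
  proof (intro conjI allI impI)
    fix k :: nat and vs :: "'v list" and q :: 'v and s :: 's assume "enat k < enat n" "length vs = k" "(q,s) \<in> U"
    then show "dirD (\<lambda>x. frechet_derivative (\<lambda>x. h x s) (at x) v) vs differentiable (at q)"
      using H1[of "Suc k" "vs @ [v]" q s] by (simp add: dirD_append)
  next
    fix k :: nat and vs :: "'v list" assume "enat k \<le> enat n" "length vs = k"
    then show "continuous_on U (\<lambda>(q,s). dirD (\<lambda>x. frechet_derivative (\<lambda>x. h x s) (at x) v) vs q)"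
      using H2[of "Suc k" "vs @ [v]"] by (simp add: dirD_append)
  qed
  ultimately show "continuous_on U (\<lambda>(q,s). h q s) \<and> (\<forall>q s. (q,s)\<in>U \<longrightarrow> (\<lambda>x. h x s) differentiable (at q)) \<and>
   (\<forall>v. relC (enat n) U (\<lambda>q s. frechet_derivative (\<lambda>x. h x s) (at q) v))" by blast
next
  assume H: "continuous_on U (\<lambda>(q,s). h q s) \<and> (\<forall>q s. (q,s)\<in>U \<longrightarrow> (\<lambda>x. h x s) differentiable (at q)) \<and>
   (\<forall>v. relC (enat n) U (\<lambda>q s. frechet_derivative (\<lambda>x. h x s) (at q) v))"
  show "relC (enat (Suc n)) U h"
    unfolding relC_def
  proof (intro conjI allI impI)
    fix k :: nat and vs :: "'v list" and q :: 'v and s :: 's assume k: "enat k < enat (Suc n)" "length vs = k" "(q,s) \<in> U"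
    show "dirD (\<lambda>x. h x s) vs differentiable (at q)"
    proof (cases vs rule: rev_exhaust)
      case Nil then show ?thesis using H k by simp
    next
      case (snoc ws v)
      with k have "enat (length ws) < enat n" by simp
      have R: "relC (enat n) U (\<lambda>q s. frechet_derivative (\<lambda>x. h x s) (at q) v)" using H by blast
      then have "dirD (\<lambda>x. frechet_derivative (\<lambda>x. h x s) (at x) v) ws differentiable (at q)"
        using \<open>enat (length ws) < enat n\<close> k(3) unfolding relC_def by blast
      then show ?thesis using snoc by (simp add: dirD_append)
    qed
  next
    fix k :: nat and vs :: "'v list" assume k: "enat k \<le> enat (Suc n)" "length vs = k"
    show "continuous_on U (\<lambda>(q, s). dirD (\<lambda>x. h x s) vs q)"
    proof (cases vs rule: rev_exhaust)
      case Nil then show ?thesis using H k by simp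
    next
      case (snoc ws v)
      with k have "enat (length ws) \<le> enat n" by simp
      have R: "relC (enat n) U (\<lambda>q s. frechet_derivative (\<lambda>x. h x s) (at q) v)" using H by blast
      then have "continuous_on U (\<lambda>(q, s). dirD (\<lambda>x. frechet_derivative (\<lambda>x. h x s) (at x) v) ws q)"
        using \<open>enat (length ws) \<le> enat n\<close> unfolding relC_def by blast
      then show ?thesis using snoc by (simp add: dirD_append)
    qed
  qed
qed

lemma relC_le: "relC r U h \<Longrightarrow> r' \<le> r \<Longrightarrow> relC r' U h"
  unfolding relC_def
  apply (intro conjI allI impI)
  subgoal for k vs q s by (metis order_less_le_trans)
  subgoal for k vs by (metis order_trans)
  done

lemma relC_iff_all:
  fixes h :: "'v::euclidean_space \<Rightarrow> 's::topological_space \<Rightarrow> 'w::euclidean_space" and U :: "('v \<times> 's) set"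
  shows "relC r U h \<longleftrightarrow> (\<forall>n. enat n \<le> r \<longrightarrow> relC (enat n) U h)"
proof
  assume "relC r U h" then show "\<forall>n. enat n \<le> r \<longrightarrow> relC (enat n) U h" using relC_le by blast
next
  assume H: "\<forall>n. enat n \<le> r \<longrightarrow> relC (enat n) U h"
  show "relC r U h" unfolding relC_def
  proof (intro conjI allI impI)
    fix k :: nat and vs :: "'v list" and q :: 'v and s :: 's assume k: "enat k < r" "length vs = k" "(q,s) \<in> U"
    then have "enat (Suc k) \<le> r" by (simp add: Suc_ile_eq)
    then have "relC (enat (Suc k)) U h" using H by blast
    then show "dirD (\<lambda>x. h x s) vs differentiable (at q)" using k unfolding relC_def by auto
  next
    fix k :: nat and vs :: "'v list" assume k: "enat k \<le> r" "length vs = k"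
    then have "relC (enat k) U h" using H by blast
    then show "continuous_on U (\<lambda>(q, s). dirD (\<lambda>x. h x s) vs q)" using k unfolding relC_def by auto
  qed
qed

lemma relC_subset: "relC r U h \<Longrightarrow> V \<subseteq> U \<Longrightarrow> relC r V h"
  unfolding relC_def by (blast intro: continuous_on_subset)

lemma fd_cong_open:
  assumes "open T" "x \<in> T" "\<And>y. y \<in> T \<Longrightarrow> f y = g y"
  shows "frechet_derivative f (at x) = frechet_derivative g (at x)"
proof -
  have "\<And>D. (f has_derivative D) (at x) \<longleftrightarrow> (g has_derivative D) (at x)"
    using has_derivative_transform_within_open[OF _ assms(1,2)] assms(3) by metis
  then show ?thesis unfolding frechet_derivative_def by simp
qed

lemma diff_cong_open:
  assumes "open T" "x \<in> T" "\<And>y. y \<in> T \<Longrightarrow> f y = g y"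
  shows "f differentiable (at x) \<longleftrightarrow> g differentiable (at x)"
proof -
  have "\<And>D. (f has_derivative D) (at x) \<longleftrightarrow> (g has_derivative D) (at x)"
    using has_derivative_transform_within_open[OF _ assms(1,2)] assms(3) by metis
  then show ?thesis unfolding differentiable_def by simp
qed

lemma dirD_cong_open:
  assumes "open T" "\<And>y. y \<in> T \<Longrightarrow> f y = g y"
  shows "y \<in> T \<Longrightarrow> dirD f vs y = dirD g vs y"
proof (induction vs arbitrary: y)
  case Nil then show ?case using assms by simp
next
  case (Cons v vs)
  then show ?case using fd_cong_open[OF assms(1) Cons(2), of "dirD f vs" "dirD g vs"] by simp
qed

lemma open_slice: "open U \<Longrightarrow> open {q. (q,s) \<in> U}"
proof -
  assume "open U"
  moreover have "continuous_on UNIV (\<lambda>q::'a::topological_space. (q,s))"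
    by (intro continuous_intros)
  ultimately have "open ((\<lambda>q. (q,s)) -` U)" by (rule open_vimage)
  then show ?thesis by (simp add: vimage_def)
qed

lemma relC_cong:
  fixes h h' :: "'v::euclidean_space \<Rightarrow> 's::topological_space \<Rightarrow> 'w::euclidean_space" and U :: "('v \<times> 's) set"
  assumes U: "open U" and eq: "\<And>q s. (q,s) \<in> U \<Longrightarrow> h q s = h' q s" and R: "relC r U h"
  shows "relC r U h'"
proof -
  have D: "dirD (\<lambda>x. h x s) vs y = dirD (\<lambda>x. h' x s) vs y" if "(y,s) \<in> U" for vs y s
    using dirD_cong_open[OF open_slice[OF U, of s], of "\<lambda>x. h x s" "\<lambda>x. h' x s" y vs] eq that by simp
  have Df: "dirD (\<lambda>x. h x s) vs differentiable (at q) \<longleftrightarrow> dirD (\<lambda>x. h' x s) vs differentiable (at q)"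
    if "(q,s) \<in> U" for vs q s
    using diff_cong_open[OF open_slice[OF U, of s], of q "dirD (\<lambda>x. h x s) vs" "dirD (\<lambda>x. h' x s) vs"] D that by simp
  have C: "continuous_on U (\<lambda>(q, s). dirD (\<lambda>x. h x s) vs q) \<longleftrightarrow> continuous_on U (\<lambda>(q, s). dirD (\<lambda>x. h' x s) vs q)" for vs
    by (rule continuous_on_cong) (auto simp: D)
  show ?thesis using R unfolding relC_def
    apply (intro conjI allI impI)
    subgoal for k vs q s using Df by blast
    subgoal for k vs using C by blast
    done
qed

lemma relC_const: "relC (enat n) U (\<lambda>q s. c)"
proof (induction n arbitrary: c)
  case 0 then show ?case by (simp add: relC_0 continuous_on_const)
next
  case (Suc n)
  have "frechet_derivative (\<lambda>x. c) (at q) = (\<lambda>_. 0)" for q :: "'a"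
    by (rule frechet_derivative_at[symmetric]) (rule has_derivative_const)
  then show ?case using Suc by (simp add: relC_Suc continuous_on_const)
qed

lemma fd_eqI: "(f has_derivative D) (at x) \<Longrightarrow> frechet_derivative f (at x) v = D v"
  by (metis frechet_derivative_at)

lemma relC_add:
  fixes h1 h2 :: "'v::euclidean_space \<Rightarrow> 's::topological_space \<Rightarrow> 'w::euclidean_space" and U :: "('v \<times> 's) set"
  assumes U: "open U"
  shows "relC (enat n) U h1 \<Longrightarrow> relC (enat n) U h2 \<Longrightarrow> relC (enat n) U (\<lambda>q s. h1 q s + h2 q s)"
proof (induction n arbitrary: h1 h2)
  case 0 then show ?case by (simp add: relC_0 case_prod_unfold continuous_on_add)
next
  case (Suc n)
  from Suc.prems have C1: "continuous_on U (\<lambda>(q,s). h1 q s)"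
    and D1: "\<And>q s. (q,s)\<in>U \<Longrightarrow> (\<lambda>x. h1 x s) differentiable (at q)"
    and R1: "\<And>v. relC (enat n) U (\<lambda>q s. frechet_derivative (\<lambda>x. h1 x s) (at q) v)"
    and C2: "continuous_on U (\<lambda>(q,s). h2 q s)"
    and D2: "\<And>q s. (q,s)\<in>U \<Longrightarrow> (\<lambda>x. h2 x s) differentiable (at q)"
    and R2: "\<And>v. relC (enat n) U (\<lambda>q s. frechet_derivative (\<lambda>x. h2 x s) (at q) v)"
    unfolding relC_Suc by blast+
  have HD: "((\<lambda>x. h1 x s + h2 x s) has_derivative (\<lambda>v. frechet_derivative (\<lambda>x. h1 x s) (at q) v + frechet_derivative (\<lambda>x. h2 x s) (at q) v)) (at q)"
    if "(q,s) \<in> U" for q s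
    using has_derivative_add[OF D1[OF that, unfolded frechet_derivative_works] D2[OF that, unfolded frechet_derivative_works]] .
  show ?case unfolding relC_Suc
  proof (intro conjI allI impI)
    show "continuous_on U (\<lambda>(q,s). h1 q s + h2 q s)"
      using C1 C2 by (simp add: case_prod_unfold continuous_on_add)
  next
    fix q s assume "(q,s) \<in> U" then show "(\<lambda>x. h1 x s + h2 x s) differentiable (at q)"
      using HD differentiableI by blast
  next
    fix v
    show "relC (enat n) U (\<lambda>q s. frechet_derivative (\<lambda>x. h1 x s + h2 x s) (at q) v)"
      by (rule relC_cong[OF U _ Suc.IH[OF R1 R2]]) (simp add: fd_eqI[OF HD])
  qed
qed

lemma relC_bilin:
  fixes h1 :: "'v::euclidean_space \<Rightarrow> 's::topological_space \<Rightarrow> 'a::euclidean_space"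
    and h2 :: "'v \<Rightarrow> 's \<Rightarrow> 'b::euclidean_space" and prod :: "'a \<Rightarrow> 'b \<Rightarrow> 'c::euclidean_space"
    and U :: "('v \<times> 's) set"
  assumes bb: "bounded_bilinear prod" and U: "open U"
  shows "relC (enat n) U h1 \<Longrightarrow> relC (enat n) U h2 \<Longrightarrow> relC (enat n) U (\<lambda>q s. prod (h1 q s) (h2 q s))"
proof (induction n arbitrary: h1 h2)
  case 0 then show ?case
    by (simp add: relC_0 case_prod_unfold bounded_bilinear.continuous_on[OF bb])
next
  case (Suc n)
  from Suc.prems have C1: "continuous_on U (\<lambda>(q,s). h1 q s)"
    and D1: "\<And>q s. (q,s)\<in>U \<Longrightarrow> (\<lambda>x. h1 x s) differentiable (at q)"
    and R1: "\<And>v. relC (enat n) U (\<lambda>q s. frechet_derivative (\<lambda>x. h1 x s) (at q) v)"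
    and C2: "continuous_on U (\<lambda>(q,s). h2 q s)"
    and D2: "\<And>q s. (q,s)\<in>U \<Longrightarrow> (\<lambda>x. h2 x s) differentiable (at q)"
    and R2: "\<And>v. relC (enat n) U (\<lambda>q s. frechet_derivative (\<lambda>x. h2 x s) (at q) v)"
    unfolding relC_Suc by blast+
  have L1: "relC (enat n) U h1" and L2: "relC (enat n) U h2"
    using Suc.prems relC_le[of "enat (Suc n)" U _ "enat n"] by auto
  have HD: "((\<lambda>x. prod (h1 x s) (h2 x s)) has_derivative (\<lambda>v. prod (h1 q s) (frechet_derivative (\<lambda>x. h2 x s) (at q) v) + prod (frechet_derivative (\<lambda>x. h1 x s) (at q) v) (h2 q s))) (at q)"
    if "(q,s) \<in> U" for q s
    using bounded_bilinear.FDERIV[OF bb D1[OF that, unfolded frechet_derivative_works] D2[OF that, unfolded frechet_derivative_works]] .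
  show ?case unfolding relC_Suc
  proof (intro conjI allI impI)
    show "continuous_on U (\<lambda>(q,s). prod (h1 q s) (h2 q s))"
      using C1 C2 by (simp add: case_prod_unfold bounded_bilinear.continuous_on[OF bb])
  next
    fix q s assume "(q,s) \<in> U" then show "(\<lambda>x. prod (h1 x s) (h2 x s)) differentiable (at q)"
      using HD differentiableI by blast
  next
    fix v
    have X: "relC (enat n) U (\<lambda>q s. prod (h1 q s) (frechet_derivative (\<lambda>x. h2 x s) (at q) v) + prod (frechet_derivative (\<lambda>x. h1 x s) (at q) v) (h2 q s))"
      by (rule relC_add[OF U Suc.IH[OF L1 R2] Suc.IH[OF R1 L2]])
    show "relC (enat n) U (\<lambda>q s. frechet_derivative (\<lambda>x. prod (h1 x s) (h2 x s)) (at q) v)"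
      by (rule relC_cong[OF U _ X]) (simp add: fd_eqI[OF HD])
  qed
qed

lemma relC_sum:
  fixes h :: "'i \<Rightarrow> 'v::euclidean_space \<Rightarrow> 's::topological_space \<Rightarrow> 'w::euclidean_space" and U :: "('v \<times> 's) set"
  assumes U: "open U" and I: "finite I" and R: "\<And>i. i \<in> I \<Longrightarrow> relC (enat n) U (h i)"
  shows "relC (enat n) U (\<lambda>q s. \<Sum>i\<in>I. h i q s)"
  using I R
proof (induction I rule: finite_induct)
  case empty then show ?case by (simp add: relC_const)
next
  case (insert i I)
  then show ?case by (simp add: relC_add[OF U])
qed

lemma relC_comp0:
  fixes \<phi> :: "'v::euclidean_space \<Rightarrow> 's::topological_space \<Rightarrow> 'x::euclidean_space"
    and g :: "'w::euclidean_space \<Rightarrow> 's \<Rightarrow> 'v" and U :: "('v \<times> 's) set" and U' :: "('w \<times> 's) set"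
  assumes M: "\<And>w s. (w,s) \<in> U' \<Longrightarrow> (g w s, s) \<in> U"
  shows "relC (enat 0) U \<phi> \<Longrightarrow> relC (enat 0) U' g \<Longrightarrow> relC (enat 0) U' (\<lambda>w s. \<phi> (g w s) s)"
proof -
  assume a: "relC (enat 0) U \<phi>" "relC (enat 0) U' g"
  have c1: "continuous_on U (\<lambda>(q,s). \<phi> q s)" and c2: "continuous_on U' (\<lambda>(w,s). g w s)"
    using a by (auto simp: relC_0)
  have c3: "continuous_on U' (\<lambda>x. (g (fst x) (snd x), snd x))"
    using c2 by (simp add: case_prod_unfold continuous_on_Pair continuous_on_snd)
  have "(\<lambda>x. (g (fst x) (snd x), snd x)) ` U' \<subseteq> U" using M by auto
  from continuous_on_compose2[OF c1 c3 this] show ?thesis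
    by (simp add: relC_0 case_prod_unfold)
qed

lemma relC_comp:
  fixes \<phi> :: "'v::euclidean_space \<Rightarrow> 's::topological_space \<Rightarrow> 'x::euclidean_space"
    and g :: "'w::euclidean_space \<Rightarrow> 's \<Rightarrow> 'v" and U :: "('v \<times> 's) set" and U' :: "('w \<times> 's) set"
  assumes U: "open U" and U': "open U'" and M: "\<And>w s. (w,s) \<in> U' \<Longrightarrow> (g w s, s) \<in> U"
  shows "relC (enat n) U \<phi> \<Longrightarrow> relC (enat n) U' g \<Longrightarrow> relC (enat n) U' (\<lambda>w s. \<phi> (g w s) s)"
proof (induction n arbitrary: \<phi>)
  case 0 show ?case by (rule relC_comp0[where U=U and U'=U' and g=g, OF M "0"(1) "0"(2)])
next
  case (Suc n)
  from Suc.prems have C1: "continuous_on U (\<lambda>(q,s). \<phi> q s)"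
    and D1: "\<And>q s. (q,s)\<in>U \<Longrightarrow> (\<lambda>x. \<phi> x s) differentiable (at q)"
    and R1: "\<And>v. relC (enat n) U (\<lambda>q s. frechet_derivative (\<lambda>x. \<phi> x s) (at q) v)"
    and D2: "\<And>q s. (q,s)\<in>U' \<Longrightarrow> (\<lambda>x. g x s) differentiable (at q)"
    and R2: "\<And>v. relC (enat n) U' (\<lambda>q s. frechet_derivative (\<lambda>x. g x s) (at q) v)"
    unfolding relC_Suc by blast+
  have L2: "relC (enat n) U' g" and L0: "relC (enat 0) U' g" and L00: "relC (enat 0) U \<phi>"
    using Suc.prems relC_le[of "enat (Suc n)" U' g "enat n"] relC_le[of "enat (Suc n)" U' g "enat 0"]
      relC_le[of "enat (Suc n)" U \<phi> "enat 0"] by auto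
  have HD: "((\<lambda>x. \<phi> (g x s) s) has_derivative (\<lambda>u. frechet_derivative (\<lambda>x. \<phi> x s) (at (g w s)) (frechet_derivative (\<lambda>x. g x s) (at w) u))) (at w)"
    if "(w,s) \<in> U'" for w s
    using has_derivative_compose[OF D2[OF that, unfolded frechet_derivative_works] D1[OF M[OF that], unfolded frechet_derivative_works]] .
  have EQ: "frechet_derivative (\<lambda>x. \<phi> x s) (at (g w s)) (frechet_derivative (\<lambda>x. g x s) (at w) u)
     = (\<Sum>b\<in>Basis. (frechet_derivative (\<lambda>x. g x s) (at w) u \<bullet> b) *\<^sub>R frechet_derivative (\<lambda>x. \<phi> x s) (at (g w s)) b)"
    if "(w,s) \<in> U'" for w s u
  proof -
    have lin: "linear (frechet_derivative (\<lambda>x. \<phi> x s) (at (g w s)))"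
      using D1[OF M[OF that], unfolded frechet_derivative_works] has_derivative_linear by blast
    let ?D = "frechet_derivative (\<lambda>x. \<phi> x s) (at (g w s))"
    let ?y = "frechet_derivative (\<lambda>x. g x s) (at w) u"
    have "?D ?y = ?D (\<Sum>b\<in>Basis. (?y \<bullet> b) *\<^sub>R b)" by (simp only: euclidean_representation)
    also have "\<dots> = (\<Sum>b\<in>Basis. ?D ((?y \<bullet> b) *\<^sub>R b))" by (rule linear_sum[OF lin])
    also have "\<dots> = (\<Sum>b\<in>Basis. (?y \<bullet> b) *\<^sub>R ?D b)" by (simp only: linear_scale[OF lin])
    finally show ?thesis .
  qed
  have C0: "continuous_on U' (\<lambda>(w,s). \<phi> (g w s) s)"
    using relC_comp0[OF M L00 L0] by (simp add: relC_0)
  show ?case unfolding relC_Suc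
  proof (intro conjI allI impI)
    show "continuous_on U' (\<lambda>(w,s). \<phi> (g w s) s)" by (rule C0)
  next
    fix q s assume "(q,s) \<in> U'" then show "(\<lambda>x. \<phi> (g x s) s) differentiable (at q)"
      using HD differentiableI by blast
  next
    fix u
    have X: "relC (enat n) U' (\<lambda>w s. \<Sum>b\<in>Basis. (frechet_derivative (\<lambda>x. g x s) (at w) u \<bullet> b) *\<^sub>R frechet_derivative (\<lambda>x. \<phi> x s) (at (g w s)) b)"
    proof (rule relC_sum[OF U' finite_Basis])
      fix b :: 'v assume "b \<in> Basis"
      have r1: "relC (enat n) U' (\<lambda>w s. frechet_derivative (\<lambda>x. g x s) (at w) u \<bullet> b)"
        by (rule relC_bilin[OF bounded_bilinear_inner U' R2 relC_const])
      have r2: "relC (enat n) U' (\<lambda>w s. frechet_derivative (\<lambda>x. \<phi> x s) (at (g w s)) b)"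
        using Suc.IH[OF R1 L2] .
      show "relC (enat n) U' (\<lambda>w s. (frechet_derivative (\<lambda>x. g x s) (at w) u \<bullet> b) *\<^sub>R frechet_derivative (\<lambda>x. \<phi> x s) (at (g w s)) b)"
        by (rule relC_bilin[OF bounded_bilinear_scaleR U' r1 r2])
    qed
    show "relC (enat n) U' (\<lambda>w s. frechet_derivative (\<lambda>x. \<phi> (g x s) s) (at w) u)"
    proof (rule relC_cong[OF U' _ X])
      fix w s assume ws: "(w,s) \<in> U'"
      show "(\<Sum>b\<in>Basis. (frechet_derivative (\<lambda>x. g x s) (at w) u \<bullet> b) *\<^sub>R frechet_derivative (\<lambda>x. \<phi> x s) (at (g w s)) b)
        = frechet_derivative (\<lambda>x. \<phi> (g x s) s) (at w) u"
        using fd_eqI[OF HD[OF ws]] EQ[OF ws] by simp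
    qed
  qed
qed

lemma linear_inv_bij:
  assumes lf: "linear f" and bf: "bij f"
  shows "linear (inv f)"
proof -
  have fi: "\<And>x. f (inv f x) = x" using bf by (meson bij_inv_eq_iff)
  have inf: "\<And>x. inv f (f x) = x" using bf by (simp add: bij_is_inj)
  show ?thesis
  proof (rule linearI)
    fix x y
    have "inv f (x + y) = inv f (f (inv f x) + f (inv f y))" by (simp add: fi)
    also have "\<dots> = inv f (f (inv f x + inv f y))" by (simp add: linear_add[OF lf])
    finally show "inv f (x + y) = inv f x + inv f y" by (simp add: inf)
  next
    fix c :: real and x
    have "inv f (c *\<^sub>R x) = inv f (c *\<^sub>R f (inv f x))" by (simp add: fi)
    also have "\<dots> = inv f (f (c *\<^sub>R inv f x))" by (simp add: linear_scale[OF lf])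
    finally show "inv f (c *\<^sub>R x) = c *\<^sub>R inv f x" by (simp add: inf)
  qed
qed

lemma lin_expand:
  fixes M :: "'v::euclidean_space \<Rightarrow> 'w::real_vector"
  assumes lin: "linear M"
  shows "M y = (\<Sum>b\<in>Basis. (y \<bullet> b) *\<^sub>R M b)"
proof -
  have "M y = M (\<Sum>b\<in>Basis. (y \<bullet> b) *\<^sub>R b)" by (simp only: euclidean_representation)
  also have "\<dots> = (\<Sum>b\<in>Basis. M ((y \<bullet> b) *\<^sub>R b))" by (rule linear_sum[OF lin])
  also have "\<dots> = (\<Sum>b\<in>Basis. (y \<bullet> b) *\<^sub>R M b)" by (simp only: linear_scale[OF lin])
  finally show ?thesis .
qed

lemma lin_norm_bound:
  fixes M :: "'v::euclidean_space \<Rightarrow> 'w::real_normed_vector"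
  assumes lin: "linear M"
  shows "norm (M y) \<le> (\<Sum>b\<in>Basis. norm (M b)) * norm y"
proof -
  have "norm (M y) = norm (\<Sum>b\<in>Basis. (y \<bullet> b) *\<^sub>R M b)" using lin_expand[OF lin, of y] by (rule arg_cong)
  also have "\<dots> \<le> (\<Sum>b\<in>Basis. norm ((y \<bullet> b) *\<^sub>R M b))" by (rule norm_sum)
  also have "\<dots> \<le> (\<Sum>b\<in>Basis. norm y * norm (M b))"
  proof (rule sum_mono)
    fix b :: 'v assume "b \<in> Basis"
    then have "\<bar>y \<bullet> b\<bar> \<le> norm y" by (rule Basis_le_norm)
    then show "norm ((y \<bullet> b) *\<^sub>R M b) \<le> norm y * norm (M b)"
      by (simp add: mult_right_mono)
  qed
  also have "\<dots> = (\<Sum>b\<in>Basis. norm (M b)) * norm y" by (simp add: sum_distrib_left mult.commute)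
  finally show ?thesis .
qed

lemma inv_tendsto:
  fixes L :: "'a \<Rightarrow> 'v::euclidean_space \<Rightarrow> 'w::euclidean_space"
  assumes lin0: "linear L0" and bij0: "bij L0"
    and ev: "\<forall>\<^sub>F x in F. linear (L x) \<and> bij (L x)"
    and conv: "\<And>b. b \<in> Basis \<Longrightarrow> ((\<lambda>x. L x b) \<longlongrightarrow> L0 b) F"
  shows "((\<lambda>x. inv (L x) u) \<longlongrightarrow> inv L0 u) F"
proof -
  have li: "linear (inv L0)" by (rule linear_inv_bij[OF lin0 bij0])
  obtain K where K: "K > 0" "\<And>z. norm (inv L0 z) \<le> K * norm z"
    using linear_bounded_pos[OF li] by blast
  have fi0: "\<And>x. L0 (inv L0 x) = x" using bij0 by (meson bij_inv_eq_iff)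
  have inf0: "\<And>x. inv L0 (L0 x) = x" using bij0 by (simp add: bij_is_inj)
  define D where "D x = (\<Sum>b\<in>Basis. norm (L x b - L0 b))" for x
  have Dt: "(D \<longlongrightarrow> 0) F"
    unfolding D_def
    by (intro tendsto_null_sum tendsto_norm_zero LIM_zero conv)
  have "\<forall>\<^sub>F x in F. D x < 1 / (2 * K)"
    using order_tendstoD(2)[OF Dt] K by simp
  define N0 where "N0 = norm (inv L0 u)"
  have main: "\<forall>\<^sub>F x in F. norm (inv (L x) u - inv L0 u) \<le> 2 * K * N0 * D x"
    using ev \<open>\<forall>\<^sub>F x in F. D x < 1 / (2 * K)\<close>
  proof eventually_elim
    case (elim x)
    then have lx: "linear (L x)" and bx: "bij (L x)" and Dx: "D x < 1 / (2 * K)" by auto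
    define y where "y = inv (L x) u"
    have Ly: "L x y = u" unfolding y_def using bx by (meson bij_inv_eq_iff)
    have lind: "linear (\<lambda>z. L x z - L0 z)" using lx lin0 by (rule linear_compose_sub)
    have nb: "norm (L x z - L0 z) \<le> D x * norm z" for z
      using lin_norm_bound[OF lind, of z] unfolding D_def by simp
    have "inv L0 u - y = inv L0 (L x y - L0 y)"
      by (simp add: Ly linear_diff[OF li] inf0)
    then have "norm (y - inv L0 u) = norm (inv L0 (L x y - L0 y))"
      by (metis norm_minus_commute)
    also have "\<dots> \<le> K * norm (L x y - L0 y)" by (rule K(2))
    also have "\<dots> \<le> K * (D x * norm y)" using nb[of y] K(1) by (simp add: mult_left_mono)
    finally have e1: "norm (y - inv L0 u) \<le> K * (D x * norm y)" .
    have D0: "D x \<ge> 0" unfolding D_def by (simp add: sum_nonneg)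
    have KD: "K * D x \<le> 1/2" using Dx K(1) by (simp add: field_simps)
    have "norm y \<le> N0 + norm (y - inv L0 u)" unfolding N0_def by (metis norm_triangle_sub add.commute)
    also have "\<dots> \<le> N0 + (K * D x) * norm y" using e1 by (simp add: mult.assoc)
    also have "\<dots> \<le> N0 + 1/2 * norm y" using mult_right_mono[OF KD norm_ge_zero[of y]] by simp
    finally have ny: "norm y \<le> 2 * N0" by simp
    have "norm (y - inv L0 u) \<le> K * D x * norm y" using e1 by (simp add: mult.assoc)
    also have "\<dots> \<le> K * D x * (2 * N0)" using ny K(1) D0 by (simp add: mult_left_mono)
    finally show ?case unfolding y_def by (simp add: algebra_simps)
  qed
  have "((\<lambda>x. inv (L x) u - inv L0 u) \<longlongrightarrow> 0) F"
    by (rule Lim_null_comparison[OF main]) (intro tendsto_mult_right_zero Dt)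
  then show ?thesis by (rule LIM_zero_cancel)
qed

lemma cont_scale_deriv:
  fixes \<alpha> :: "'v::real_normed_vector \<Rightarrow> real" and \<beta> :: "'v \<Rightarrow> 'w::real_normed_vector"
  assumes ca: "continuous (at q) \<alpha>" and db: "(\<beta> has_derivative \<beta>') (at q)" and b0: "\<beta> q = 0"
  shows "((\<lambda>x. \<alpha> x *\<^sub>R \<beta> x) has_derivative (\<lambda>h. \<alpha> q *\<^sub>R \<beta>' h)) (at q)"
proof -
  have bl: "bounded_linear \<beta>'" using db by (rule has_derivative_bounded_linear)
  obtain B where B: "B > 0" "\<And>h. norm (\<beta>' h) \<le> B * norm h"
    using bounded_linear.pos_bounded[OF bl] by (auto simp: mult.commute)
  have e: "((\<lambda>y. norm ((\<beta> y - \<beta> q) - \<beta>' (y - q)) / norm (y - q)) \<longlongrightarrow> 0) (at q)"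
    using db unfolding has_derivative_iff_norm by blast
  have at: "(\<alpha> \<longlongrightarrow> \<alpha> q) (at q)" using ca by (simp add: continuous_at)
  have lim: "((\<lambda>y. \<bar>\<alpha> y\<bar> * (norm ((\<beta> y - \<beta> q) - \<beta>' (y - q)) / norm (y - q)) + \<bar>\<alpha> y - \<alpha> q\<bar> * B) \<longlongrightarrow> 0) (at q)"
  proof -
    have "((\<lambda>y. \<bar>\<alpha> y\<bar> * (norm ((\<beta> y - \<beta> q) - \<beta>' (y - q)) / norm (y - q)) + \<bar>\<alpha> y - \<alpha> q\<bar> * B) \<longlongrightarrow> \<bar>\<alpha> q\<bar> * 0 + \<bar>\<alpha> q - \<alpha> q\<bar> * B) (at q)"
      by (intro tendsto_intros at e)
    then show ?thesis by simp
  qed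
  have bound: "norm (norm (((\<alpha> y *\<^sub>R \<beta> y) - (\<alpha> q *\<^sub>R \<beta> q)) - \<alpha> q *\<^sub>R \<beta>' (y - q)) / norm (y - q))
      \<le> \<bar>\<alpha> y\<bar> * (norm ((\<beta> y - \<beta> q) - \<beta>' (y - q)) / norm (y - q)) + \<bar>\<alpha> y - \<alpha> q\<bar> * B" for y
  proof (cases "y = q")
    case True then show ?thesis by simp
  next
    case False
    then have d: "norm (y - q) > 0" by simp
    have eq: "((\<alpha> y *\<^sub>R \<beta> y) - (\<alpha> q *\<^sub>R \<beta> q)) - \<alpha> q *\<^sub>R \<beta>' (y - q)
        = \<alpha> y *\<^sub>R ((\<beta> y - \<beta> q) - \<beta>' (y - q)) + (\<alpha> y - \<alpha> q) *\<^sub>R \<beta>' (y - q)"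
      using b0 by (simp add: algebra_simps)
    have "norm (((\<alpha> y *\<^sub>R \<beta> y) - (\<alpha> q *\<^sub>R \<beta> q)) - \<alpha> q *\<^sub>R \<beta>' (y - q))
        \<le> \<bar>\<alpha> y\<bar> * norm ((\<beta> y - \<beta> q) - \<beta>' (y - q)) + \<bar>\<alpha> y - \<alpha> q\<bar> * norm (\<beta>' (y - q))"
      unfolding eq by (metis norm_scaleR norm_triangle_ineq)
    also have "\<dots> \<le> \<bar>\<alpha> y\<bar> * norm ((\<beta> y - \<beta> q) - \<beta>' (y - q)) + \<bar>\<alpha> y - \<alpha> q\<bar> * (B * norm (y - q))"
      using B(2)[of "y - q"] by (simp add: mult_left_mono)
    finally have "norm (((\<alpha> y *\<^sub>R \<beta> y) - (\<alpha> q *\<^sub>R \<beta> q)) - \<alpha> q *\<^sub>R \<beta>' (y - q)) / norm (y - q)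
        \<le> (\<bar>\<alpha> y\<bar> * norm ((\<beta> y - \<beta> q) - \<beta>' (y - q)) + \<bar>\<alpha> y - \<alpha> q\<bar> * (B * norm (y - q))) / norm (y - q)"
      using d by (simp add: divide_right_mono)
    also have "\<dots> = \<bar>\<alpha> y\<bar> * (norm ((\<beta> y - \<beta> q) - \<beta>' (y - q)) / norm (y - q)) + \<bar>\<alpha> y - \<alpha> q\<bar> * B"
      using d by (simp add: field_simps)
    finally show ?thesis by simp
  qed
  have "((\<lambda>y. norm (((\<alpha> y *\<^sub>R \<beta> y) - (\<alpha> q *\<^sub>R \<beta> q)) - \<alpha> q *\<^sub>R \<beta>' (y - q)) / norm (y - q)) \<longlongrightarrow> 0) (at q)"
    by (rule Lim_null_comparison[OF always_eventually[OF allI[OF bound]] lim])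
  moreover have "bounded_linear (\<lambda>h. \<alpha> q *\<^sub>R \<beta>' h)"
    using bl by (intro bounded_linear_intros)
  ultimately show ?thesis unfolding has_derivative_iff_norm by blast
qed

lemma inv_deriv:
  fixes L :: "'v::euclidean_space \<Rightarrow> 'v \<Rightarrow> 'w::euclidean_space"
  assumes T: "open T" "q \<in> T"
    and LT: "\<And>x. x \<in> T \<Longrightarrow> linear (L x) \<and> bij (L x)"
    and cont: "continuous (at q) (\<lambda>x. inv (L x) u)"
    and der: "\<And>b. b \<in> Basis \<Longrightarrow> ((\<lambda>x. L x b) has_derivative L' b) (at q)"
  shows "((\<lambda>x. inv (L x) u) has_derivative
           (\<lambda>h. - inv (L q) (\<Sum>b\<in>Basis. (inv (L q) u \<bullet> b) *\<^sub>R L' b h))) (at q)"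
proof -
  define \<Phi> where "\<Phi> x = inv (L x) u" for x
  have lq: "linear (L q)" and bq: "bij (L q)" using LT[OF T(2)] by auto
  have li: "linear (inv (L q))" by (rule linear_inv_bij[OF lq bq])
  have infq: "\<And>z. inv (L q) (L q z) = z" using bq by (simp add: bij_is_inj)
  have rep: "\<Phi> x = \<Phi> q + - inv (L q) (\<Sum>b\<in>Basis. (\<Phi> x \<bullet> b) *\<^sub>R (L x b - L q b))" if x: "x \<in> T" for x
  proof -
    have lx: "linear (L x)" and bx: "bij (L x)" using LT[OF x] by auto
    have Lx: "L x (\<Phi> x) = u" unfolding \<Phi>_def using bx by (meson bij_inv_eq_iff)
    have lind: "linear (\<lambda>z. L x z - L q z)" using lx lq by (rule linear_compose_sub)
    have "(\<Sum>b\<in>Basis. (\<Phi> x \<bullet> b) *\<^sub>R (L x b - L q b)) = L x (\<Phi> x) - L q (\<Phi> x)"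
      using lin_expand[OF lind, of "\<Phi> x"] by simp
    also have "\<dots> = u - L q (\<Phi> x)" by (simp add: Lx)
    finally have "inv (L q) (\<Sum>b\<in>Basis. (\<Phi> x \<bullet> b) *\<^sub>R (L x b - L q b)) = \<Phi> q - \<Phi> x"
      by (simp add: linear_diff[OF li] infq \<Phi>_def)
    then show ?thesis by simp
  qed
  have bl: "bounded_linear (inv (L q))" using li by (simp add: linear_conv_bounded_linear)
  have cb: "continuous (at q) (\<lambda>x. \<Phi> x \<bullet> b)" for b
    using cont unfolding \<Phi>_def by (intro continuous_intros)
  have tb: "((\<lambda>x. (\<Phi> x \<bullet> b) *\<^sub>R (L x b - L q b)) has_derivative (\<lambda>h. (\<Phi> q \<bullet> b) *\<^sub>R L' b h)) (at q)"
    if b: "b \<in> Basis" for b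
  proof -
    have "((\<lambda>x. L x b - L q b) has_derivative (\<lambda>h. L' b h - 0)) (at q)"
      by (intro has_derivative_diff der b has_derivative_const)
    then have "((\<lambda>x. L x b - L q b) has_derivative L' b) (at q)" by simp
    from cont_scale_deriv[OF cb this] show ?thesis by simp
  qed
  have "((\<lambda>x. \<Phi> q + - inv (L q) (\<Sum>b\<in>Basis. (\<Phi> x \<bullet> b) *\<^sub>R (L x b - L q b))) has_derivative
      (\<lambda>h. 0 + - inv (L q) (\<Sum>b\<in>Basis. (\<Phi> q \<bullet> b) *\<^sub>R L' b h))) (at q)"
    by (intro has_derivative_add has_derivative_const has_derivative_minus
        bounded_linear.has_derivative[OF bl] has_derivative_sum tb)
  then have "((\<lambda>x. \<Phi> q + - inv (L q) (\<Sum>b\<in>Basis. (\<Phi> x \<bullet> b) *\<^sub>R (L x b - L q b))) has_derivative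
      (\<lambda>h. - inv (L q) (\<Sum>b\<in>Basis. (\<Phi> q \<bullet> b) *\<^sub>R L' b h))) (at q)" by simp
  then have "(\<Phi> has_derivative (\<lambda>h. - inv (L q) (\<Sum>b\<in>Basis. (\<Phi> q \<bullet> b) *\<^sub>R L' b h))) (at q)"
    by (rule has_derivative_transform_within_open[OF _ T]) (rule rep[symmetric])
  then show ?thesis unfolding \<Phi>_def .
qed

lemma Phi_cont:
  fixes f :: "'v::euclidean_space \<Rightarrow> 's::topological_space \<Rightarrow> 'w::euclidean_space" and U :: "('v \<times> 's) set"
  assumes U: "open U" and LB: "\<And>q s. (q,s) \<in> U \<Longrightarrow> bij (frechet_derivative (\<lambda>x. f x s) (at q))"
    and R: "relC (enat (Suc 0)) U f"
  shows "continuous_on U (\<lambda>(q,s). inv (frechet_derivative (\<lambda>x. f x s) (at q)) u)"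
proof -
  from R have Df: "\<And>q s. (q,s)\<in>U \<Longrightarrow> (\<lambda>x. f x s) differentiable (at q)"
    and R1: "\<And>v. relC (enat 0) U (\<lambda>q s. frechet_derivative (\<lambda>x. f x s) (at q) v)"
    unfolding relC_Suc by blast+
  have CL: "continuous_on U (\<lambda>p. frechet_derivative (\<lambda>x. f x (snd p)) (at (fst p)) v)" for v
    using R1[of v] by (simp add: relC_0 case_prod_unfold)
  have lin: "linear (frechet_derivative (\<lambda>x. f x s) (at q))" if "(q,s) \<in> U" for q s
    using Df[OF that] unfolding frechet_derivative_works by (rule has_derivative_linear)
  show ?thesis unfolding continuous_on_def case_prod_unfold
  proof
    fix p assume p: "p \<in> U"
    show "((\<lambda>p. inv (frechet_derivative (\<lambda>x. f x (snd p)) (at (fst p))) u) \<longlongrightarrow>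
            inv (frechet_derivative (\<lambda>x. f x (snd p)) (at (fst p))) u) (at p within U)"
    proof (rule inv_tendsto)
      show "linear (frechet_derivative (\<lambda>x. f x (snd p)) (at (fst p)))" using lin[of "fst p" "snd p"] p by simp
      show "bij (frechet_derivative (\<lambda>x. f x (snd p)) (at (fst p)))" using LB[of "fst p" "snd p"] p by simp
      show "\<forall>\<^sub>F x in at p within U. linear (frechet_derivative (\<lambda>xa. f xa (snd x)) (at (fst x))) \<and>
                                   bij (frechet_derivative (\<lambda>xa. f xa (snd x)) (at (fst x)))"
        unfolding eventually_at_topological using U p lin LB
        by (intro exI[of _ U]) (auto simp: case_prod_unfold)
      fix b :: 'v
      show "((\<lambda>x. frechet_derivative (\<lambda>xa. f xa (snd x)) (at (fst x)) b) \<longlongrightarrow>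
              frechet_derivative (\<lambda>x. f x (snd p)) (at (fst p)) b) (at p within U)"
        using CL[of b] p unfolding continuous_on_def by blast
    qed
  qed
qed

lemma Phi_relC:
  fixes f :: "'v::euclidean_space \<Rightarrow> 's::topological_space \<Rightarrow> 'w::euclidean_space" and U :: "('v \<times> 's) set"
  assumes U: "open U" and LB: "\<And>q s. (q,s) \<in> U \<Longrightarrow> bij (frechet_derivative (\<lambda>x. f x s) (at q))"
  shows "relC (enat (Suc n)) U f \<Longrightarrow> relC (enat n) U (\<lambda>q s. inv (frechet_derivative (\<lambda>x. f x s) (at q)) u)"
proof (induction n arbitrary: u)
  case 0 then show ?case using Phi_cont[OF U LB] by (simp add: relC_0)
next
  case (Suc n)
  have R1: "relC (enat (Suc 0)) U f" and Rn: "relC (enat (Suc n)) U f"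
    using Suc.prems relC_le[of "enat (Suc (Suc n))" U f] by auto
  from Suc.prems have Df: "\<And>q s. (q,s)\<in>U \<Longrightarrow> (\<lambda>x. f x s) differentiable (at q)"
    and RD: "\<And>b. relC (enat (Suc n)) U (\<lambda>q s. frechet_derivative (\<lambda>x. f x s) (at q) b)"
    unfolding relC_Suc by blast+
  from RD have DD: "\<And>b q s. (q,s)\<in>U \<Longrightarrow> (\<lambda>y. frechet_derivative (\<lambda>x. f x s) (at y) b) differentiable (at q)"
    and RDD: "\<And>b v. relC (enat n) U (\<lambda>q s. frechet_derivative (\<lambda>y. frechet_derivative (\<lambda>x. f x s) (at y) b) (at q) v)"
    unfolding relC_Suc by blast+
  have lin: "linear (frechet_derivative (\<lambda>x. f x s) (at q))" if "(q,s) \<in> U" for q s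
    using Df[OF that] unfolding frechet_derivative_works by (rule has_derivative_linear)
  have C: "continuous_on U (\<lambda>(q,s). inv (frechet_derivative (\<lambda>x. f x s) (at q)) u')" for u'
    by (rule Phi_cont[OF U LB R1])
  let ?L = "\<lambda>q s. frechet_derivative (\<lambda>x. f x s) (at q)"
  let ?L' = "\<lambda>q s b. frechet_derivative (\<lambda>y. frechet_derivative (\<lambda>x. f x s) (at y) b) (at q)"
  have HD: "((\<lambda>x. inv (?L x s) u) has_derivative
           (\<lambda>h. - inv (?L q s) (\<Sum>b\<in>Basis. (inv (?L q s) u \<bullet> b) *\<^sub>R ?L' q s b h))) (at q)"
    if qs: "(q,s) \<in> U" for q s
  proof (rule inv_deriv[where T="{x. (x,s) \<in> U}"])
    show "open {x. (x,s) \<in> U}" by (rule open_slice[OF U])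
    show "q \<in> {x. (x,s) \<in> U}" using qs by simp
    show "\<And>x. x \<in> {x. (x,s) \<in> U} \<Longrightarrow> linear (?L x s) \<and> bij (?L x s)" using lin LB by auto
    have "continuous_on {x. (x,s) \<in> U} (\<lambda>x. inv (?L x s) u)"
    proof -
      have c1: "continuous_on {x. (x,s) \<in> U} (\<lambda>x. (x,s))" by (intro continuous_intros)
      have "(\<lambda>x. (x,s)) ` {x. (x,s) \<in> U} \<subseteq> U" by auto
      from continuous_on_compose2[OF C[of u] c1 this] show ?thesis by simp
    qed
    then show "continuous (at q) (\<lambda>x. inv (?L x s) u)"
      using continuous_on_eq_continuous_at[OF open_slice[OF U, of s]] qs by blast
    fix b :: 'v
    show "((\<lambda>x. ?L x s b) has_derivative ?L' q s b) (at q)"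
      using DD[OF qs, of b] unfolding frechet_derivative_works .
  qed
  have EQ: "frechet_derivative (\<lambda>x. inv (?L x s) u) (at q) v =
      (\<Sum>b\<in>Basis. \<Sum>c\<in>Basis. ((inv (?L q s) u \<bullet> (- b)) * (?L' q s b v \<bullet> c)) *\<^sub>R inv (?L q s) c)"
    if qs: "(q,s) \<in> U" for q s v
  proof -
    have li: "linear (inv (?L q s))" using linear_inv_bij[OF lin[OF qs] LB[OF qs]] .
    have "frechet_derivative (\<lambda>x. inv (?L x s) u) (at q) v = - inv (?L q s) (\<Sum>b\<in>Basis. (inv (?L q s) u \<bullet> b) *\<^sub>R ?L' q s b v)"
      by (rule fd_eqI[OF HD[OF qs]])
    also have "\<dots> = - (\<Sum>b\<in>Basis. (inv (?L q s) u \<bullet> b) *\<^sub>R inv (?L q s) (?L' q s b v))"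
      by (simp add: linear_sum[OF li] linear_scale[OF li])
    also have "\<dots> = - (\<Sum>b\<in>Basis. (inv (?L q s) u \<bullet> b) *\<^sub>R (\<Sum>c\<in>Basis. (?L' q s b v \<bullet> c) *\<^sub>R inv (?L q s) c))"
    proof -
      have "\<And>b. inv (?L q s) (?L' q s b v) = (\<Sum>c\<in>Basis. (?L' q s b v \<bullet> c) *\<^sub>R inv (?L q s) c)"
        by (rule lin_expand[OF li])
      then show ?thesis by (simp only:)
    qed
    also have "\<dots> = (\<Sum>b\<in>Basis. \<Sum>c\<in>Basis. ((inv (?L q s) u \<bullet> (- b)) * (?L' q s b v \<bullet> c)) *\<^sub>R inv (?L q s) c)"
      by (simp add: scaleR_sum_right sum_negf[symmetric])
    finally show ?thesis .
  qed
  show ?case unfolding relC_Suc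
  proof (intro conjI allI impI)
    show "continuous_on U (\<lambda>(q,s). inv (?L q s) u)" by (rule C)
  next
    fix q s assume "(q,s) \<in> U" then show "(\<lambda>x. inv (?L x s) u) differentiable (at q)"
      using HD differentiableI by blast
  next
    fix v
    have X: "relC (enat n) U (\<lambda>q s. \<Sum>b\<in>Basis. \<Sum>c\<in>Basis. ((inv (?L q s) u \<bullet> (- b)) * (?L' q s b v \<bullet> c)) *\<^sub>R inv (?L q s) c)"
    proof (intro relC_sum[OF U finite_Basis])
      fix b :: 'v and c :: 'w
      have r1: "relC (enat n) U (\<lambda>q s. inv (?L q s) u \<bullet> (- b))"
        by (rule relC_bilin[OF bounded_bilinear_inner U Suc.IH[OF Rn] relC_const])
      have r2: "relC (enat n) U (\<lambda>q s. ?L' q s b v \<bullet> c)"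
        by (rule relC_bilin[OF bounded_bilinear_inner U RDD relC_const])
      have r3: "relC (enat n) U (\<lambda>q s. (inv (?L q s) u \<bullet> (- b)) * (?L' q s b v \<bullet> c))"
        by (rule relC_bilin[OF bounded_bilinear_mult U r1 r2])
      show "relC (enat n) U (\<lambda>q s. ((inv (?L q s) u \<bullet> (- b)) * (?L' q s b v \<bullet> c)) *\<^sub>R inv (?L q s) c)"
        by (rule relC_bilin[OF bounded_bilinear_scaleR U r3 Suc.IH[OF Rn]])
    qed
    show "relC (enat n) U (\<lambda>q s. frechet_derivative (\<lambda>x. inv (?L x s) u) (at q) v)"
    proof (rule relC_cong[OF U _ X])
      fix q s assume qs: "(q,s) \<in> U"
      show "(\<Sum>b\<in>Basis. \<Sum>c\<in>Basis. ((inv (?L q s) u \<bullet> (- b)) * (?L' q s b v \<bullet> c)) *\<^sub>R inv (?L q s) c)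
          = frechet_derivative (\<lambda>x. inv (?L x s) u) (at q) v"
        using EQ[OF qs] by simp
    qed
  qed
qed

lemma g_relC:
  fixes f :: "'v::euclidean_space \<Rightarrow> 's::topological_space \<Rightarrow> 'w::euclidean_space"
    and g :: "'w \<Rightarrow> 's \<Rightarrow> 'v" and U :: "('v \<times> 's) set" and U' :: "('w \<times> 's) set"
  assumes U: "open U" and U': "open U'" and M: "\<And>w s. (w,s) \<in> U' \<Longrightarrow> (g w s, s) \<in> U"
    and LB: "\<And>q s. (q,s) \<in> U \<Longrightarrow> bij (frechet_derivative (\<lambda>x. f x s) (at q))"
    and Cg: "relC (enat 0) U' g"
    and Dg: "\<And>w s. (w,s) \<in> U' \<Longrightarrow> (\<lambda>x. g x s) differentiable (at w)"
    and Eg: "\<And>w s u. (w,s) \<in> U' \<Longrightarrow> frechet_derivative (\<lambda>x. g x s) (at w) u = inv (frechet_derivative (\<lambda>x. f x s) (at (g w s))) u"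
  shows "relC (enat (Suc n)) U f \<Longrightarrow> relC (enat (Suc n)) U' g"
proof (induction n)
  case 0
  show ?case unfolding relC_Suc
  proof (intro conjI allI impI)
    show "continuous_on U' (\<lambda>(q,s). g q s)" using Cg by (simp add: relC_0)
    show "\<And>q s. (q,s) \<in> U' \<Longrightarrow> (\<lambda>x. g x s) differentiable (at q)" by (rule Dg)
    fix u
    have "relC (enat 0) U (\<lambda>q s. inv (frechet_derivative (\<lambda>x. f x s) (at q)) u)"
      by (rule Phi_relC[OF U LB 0])
    from relC_comp0[OF M this Cg]
    have X: "relC (enat 0) U' (\<lambda>w s. inv (frechet_derivative (\<lambda>x. f x s) (at (g w s))) u)" .
    show "relC (enat 0) U' (\<lambda>q s. frechet_derivative (\<lambda>x. g x s) (at q) u)"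
    proof (rule relC_cong[OF U' _ X])
      fix w s assume "(w,s) \<in> U'"
      then show "inv (frechet_derivative (\<lambda>x. f x s) (at (g w s))) u = frechet_derivative (\<lambda>x. g x s) (at w) u"
        by (rule Eg[symmetric])
    qed
  qed
next
  case (Suc n)
  have Rn: "relC (enat (Suc n)) U f" using Suc.prems relC_le[of "enat (Suc (Suc n))" U f] by auto
  have Gn: "relC (enat (Suc n)) U' g" by (rule Suc.IH[OF Rn])
  show ?case
  proof (rule relC_Suc[THEN iffD2], intro conjI allI impI)
    show "continuous_on U' (\<lambda>(q,s). g q s)" using Cg by (simp add: relC_0)
    show "\<And>q s. (q,s) \<in> U' \<Longrightarrow> (\<lambda>x. g x s) differentiable (at q)" by (rule Dg)
    fix u
    have "relC (enat (Suc n)) U (\<lambda>q s. inv (frechet_derivative (\<lambda>x. f x s) (at q)) u)"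
      by (rule Phi_relC[OF U LB Suc.prems])
    from relC_comp[OF U U' M this Gn]
    have X: "relC (enat (Suc n)) U' (\<lambda>w s. inv (frechet_derivative (\<lambda>x. f x s) (at (g w s))) u)" .
    show "relC (enat (Suc n)) U' (\<lambda>q s. frechet_derivative (\<lambda>x. g x s) (at q) u)"
    proof (rule relC_cong[OF U' _ X])
      fix w s assume "(w,s) \<in> U'"
      then show "inv (frechet_derivative (\<lambda>x. f x s) (at (g w s))) u = frechet_derivative (\<lambda>x. g x s) (at w) u"
        by (rule Eg[symmetric])
    qed
  qed
qed

lemma cont_on_nhds:
  fixes h :: "'a::topological_space \<Rightarrow> 'b::metric_space"
  assumes "continuous_on U h" "open U" "x \<in> U" "e > 0"
  shows "\<forall>\<^sub>F y in nhds x. dist (h y) (h x) < e"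
proof -
  obtain B where B: "open B" "x \<in> B" "\<forall>y\<in>U. y \<in> B \<longrightarrow> h y \<in> ball (h x) e"
    using assms(1,3,4) unfolding continuous_on_topological
    by (metis centre_in_ball open_ball)
  show ?thesis unfolding eventually_nhds
    by (rule exI[of _ "B \<inter> U"]) (use B assms(2,3) in \<open>auto simp: dist_commute\<close>)
qed

lemma near_bij:
  fixes A M :: "'v::euclidean_space \<Rightarrow> 'w::euclidean_space"
  assumes linA: "linear A" and linAi: "linear Ai" and AAi: "\<And>z. A (Ai z) = z" and AiA: "\<And>z. Ai (A z) = z"
    and K: "K > 0" "\<And>z. norm (Ai z) \<le> K * norm z"
    and linM: "linear M" and near: "\<And>y. norm (M y - A y) \<le> norm y / (2 * K)"
  shows "bij M"
proof -
  have injM: "inj M"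
    unfolding linear_inj_iff_eq_0[OF linM]
  proof (intro allI impI)
    fix y assume My: "M y = 0"
    have "norm y = norm (Ai (A y))" by (simp add: AiA)
    also have "\<dots> \<le> K * norm (A y)" by (rule K(2))
    also have "norm (A y) = norm (M y - A y)" using My by simp
    also have "K * norm (M y - A y) \<le> K * (norm y / (2 * K))" using K(1) by (intro mult_left_mono[OF near[of y]]) simp
    also have "\<dots> = norm y / 2" using K(1) by simp
    finally have "norm y \<le> norm y / 2" .
    then show "y = 0" by simp
  qed
  have injAi: "inj Ai" by (metis AAi injI)
  have "linear (Ai \<circ> M)" using linAi linM by (simp add: linear_compose)
  moreover have "inj (Ai \<circ> M)" using injAi injM by (simp add: inj_compose)
  ultimately have "surj (Ai \<circ> M)" by (intro linear_injective_imp_surjective) simp_all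
  have "surj M" unfolding surj_def
  proof
    fix w
    from \<open>surj (Ai \<circ> M)\<close> obtain x where "Ai w = (Ai \<circ> M) x" by (metis surjD)
    then have "A (Ai w) = A (Ai (M x))" by simp
    then have "w = M x" by (simp add: AAi)
    then show "\<exists>x. w = M x" by blast
  qed
  with injM show ?thesis by (simp add: bij_def)
qed

theorem lemma5p10:
  fixes f :: "'v::euclidean_space \<Rightarrow> 's::topological_space \<Rightarrow> 'w::euclidean_space"
    and t :: 's and \<U> :: "('v \<times> 's) set"
  assumes "open \<U>" and "(0, t) \<in> \<U>"
    and "relC 1 \<U> f"
    and "f 0 t = 0"
    and "bij (frechet_derivative (\<lambda>q. f q t) (at 0))"
  shows "\<exists>U U' g. open U \<and> U \<subseteq> \<U> \<and> (0, t) \<in> U \<and> open U' \<and> (0, t) \<in> U' \<and>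
           bij_betw (\<lambda>(q, s). (f q s, s)) U U' \<and>
           (\<forall>w s. (w, s) \<in> U' \<longrightarrow> (g w s, s) \<in> U \<and> f (g w s) s = w) \<and>
           relC 1 U' g \<and>
           (\<forall>r. 2 \<le> r \<longrightarrow> relC r \<U> f \<longrightarrow> relC r U' g)"
proof -
  note UU = assms(1) and t0 = assms(2) and f0 = assms(4)
  have R1: "relC (enat (Suc 0)) \<U> f" using assms(3) by (simp add: one_enat_def)
  from R1 have Cf: "continuous_on \<U> (\<lambda>(q,s). f q s)"
    and Df: "\<And>q s. (q,s)\<in>\<U> \<Longrightarrow> (\<lambda>x. f x s) differentiable (at q)"
    and RL: "\<And>v. relC (enat 0) \<U> (\<lambda>q s. frechet_derivative (\<lambda>x. f x s) (at q) v)"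
    unfolding relC_Suc by blast+
  define L where "L q s = frechet_derivative (\<lambda>x. f x s) (at q)" for q s
  have CL: "continuous_on \<U> (\<lambda>p. L (fst p) (snd p) v)" for v
    using RL[of v] by (simp add: relC_0 L_def case_prod_unfold)
  have HL: "((\<lambda>x. f x s) has_derivative L q s) (at q)" if "(q,s) \<in> \<U>" for q s
    using Df[OF that] unfolding frechet_derivative_works L_def .
  define A where "A = L 0 t"
  have linA: "linear A" unfolding A_def using HL[OF t0] by (rule has_derivative_linear)
  have bijA: "bij A" unfolding A_def L_def using assms(5) .
  define Ai where "Ai = inv A"
  have linAi: "linear Ai" unfolding Ai_def by (rule linear_inv_bij[OF linA bijA])
  have AAi: "\<And>z. A (Ai z) = z" unfolding Ai_def using bijA by (meson bij_inv_eq_iff)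
  have AiA: "\<And>z. Ai (A z) = z" unfolding Ai_def using bijA by (simp add: bij_is_inj)
  obtain K where K: "K > 0" "\<And>z. norm (Ai z) \<le> K * norm z"
    using linear_bounded_pos[OF linAi] by blast
  define c where "c = 1 / (2 * K * real DIM('v))"
  have c0: "c > 0" unfolding c_def using K(1) by simp
  have "\<forall>\<^sub>F p in nhds (0,t). \<forall>b\<in>Basis. norm (L (fst p) (snd p) b - A b) < c"
  proof (rule eventually_ball_finite[OF finite_Basis], rule ballI)
    fix b :: 'v assume "b \<in> Basis"
    from cont_on_nhds[OF CL[of b] UU t0 c0]
    show "\<forall>\<^sub>F p in nhds (0,t). norm (L (fst p) (snd p) b - A b) < c" by (simp add: dist_norm A_def)
  qed
  then obtain S where S: "open S" "(0,t) \<in> S" "\<And>p b. p \<in> S \<Longrightarrow> b \<in> Basis \<Longrightarrow> norm (L (fst p) (snd p) b - A b) < c"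
    unfolding eventually_nhds by blast
  obtain A0 N where A0N: "open A0" "open N" "(0,t) \<in> A0 \<times> N" "A0 \<times> N \<subseteq> S \<inter> \<U>"
    using open_prod_elim[OF open_Int[OF S(1) UU]] S(2) t0 by blast
  obtain \<delta> where \<delta>: "\<delta> > 0" "ball 0 \<delta> \<subseteq> A0"
    using A0N(1,3) open_contains_ball by blast
  define U where "U = ball (0::'v) \<delta> \<times> N"
  have openU: "open U" unfolding U_def using A0N(2) by (simp add: open_Times)
  have UsubS: "U \<subseteq> S" and UsubU: "U \<subseteq> \<U>" unfolding U_def using \<delta>(2) A0N(4) by auto
  have tU: "(0,t) \<in> U" unfolding U_def using \<delta>(1) A0N(3) by simp
  have linL: "linear (L q s)" if "(q,s) \<in> U" for q s
    using HL[of q s] that UsubU has_derivative_linear by blast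
  have near: "norm (L q s y - A y) \<le> norm y / (2 * K)" if qs: "(q,s) \<in> U" for q s y
  proof -
    have lind: "linear (\<lambda>z. L q s z - A z)" using linL[OF qs] linA by (rule linear_compose_sub)
    have "norm (L q s y - A y) \<le> (\<Sum>b\<in>Basis. norm (L q s b - A b)) * norm y"
      using lin_norm_bound[OF lind] by simp
    also have "(\<Sum>b\<in>Basis. norm (L q s b - A b)) \<le> of_nat (card (Basis::'v set)) * c"
      by (rule sum_bounded_above) (use S(3)[of "(q,s)"] qs UsubS in \<open>force intro: less_imp_le\<close>)
    also have "of_nat (card (Basis::'v set)) * c = 1 / (2 * K)" unfolding c_def by simp
    finally show ?thesis by (simp add: mult_right_mono)
  qed
  have bijL: "bij (L q s)" if qs: "(q,s) \<in> U" for q s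
    by (rule near_bij[OF linA linAi AAi AiA K linL[OF qs] near[OF qs]])
  have blA: "bounded_linear A" using linA by (simp add: linear_conv_bounded_linear)
  have E1: "norm ((f q1 s - f q2 s) - A (q1 - q2)) \<le> norm (q1 - q2) / (2 * K)"
    if s: "s \<in> N" and q1: "q1 \<in> ball 0 \<delta>" and q2: "q2 \<in> ball 0 \<delta>" for s q1 q2
  proof -
    have "norm ((f q1 s - A q1) - (f q2 s - A q2)) \<le> 1 / (2 * K) * norm (q1 - q2)"
    proof (rule differentiable_bound[where S="ball 0 \<delta>" and f'="\<lambda>x y. L x s y - A y"])
      show "convex (ball (0::'v) \<delta>)" by simp
      fix x :: 'v assume x: "x \<in> ball 0 \<delta>"
      then have xs: "(x,s) \<in> U" using s unfolding U_def by simp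
      show "((\<lambda>x. f x s - A x) has_derivative (\<lambda>y. L x s y - A y)) (at x within ball 0 \<delta>)"
        by (rule has_derivative_at_withinI, rule has_derivative_diff[OF HL bounded_linear_imp_has_derivative[OF blA]])
           (use xs UsubU in auto)
      show "onorm (\<lambda>y. L x s y - A y) \<le> 1 / (2 * K)"
        by (rule onorm_le) (use near[OF xs] in simp)
    qed (use q1 q2 in auto)
    then show ?thesis by (simp add: linear_diff[OF linA] algebra_simps)
  qed
  have E2: "norm (q1 - q2) \<le> 2 * K * norm (f q1 s - f q2 s)"
    if s: "s \<in> N" and q1: "q1 \<in> ball 0 \<delta>" and q2: "q2 \<in> ball 0 \<delta>" for s q1 q2
  proof -
    have "norm (q1 - q2) = norm (Ai (A (q1 - q2)))" by (simp add: AiA)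
    also have "\<dots> \<le> K * norm (A (q1 - q2))" by (rule K(2))
    also have "norm (A (q1 - q2)) \<le> norm (f q1 s - f q2 s) + norm ((f q1 s - f q2 s) - A (q1 - q2))"
      using norm_triangle_ineq4[of "f q1 s - f q2 s" "(f q1 s - f q2 s) - A (q1 - q2)"] by simp
    also have "K * (norm (f q1 s - f q2 s) + norm ((f q1 s - f q2 s) - A (q1 - q2)))
        \<le> K * (norm (f q1 s - f q2 s) + norm (q1 - q2) / (2 * K))"
      using K(1) E1[OF s q1 q2] by (intro mult_left_mono add_left_mono) auto
    also have "\<dots> = K * norm (f q1 s - f q2 s) + norm (q1 - q2) / 2"
      using K(1) by (simp add: field_simps)
    finally show ?thesis by (simp add: K(1) less_imp_le mult_left_mono)
  qed
  have injf: "q1 = q2" if "s \<in> N" "q1 \<in> ball 0 \<delta>" "q2 \<in> ball 0 \<delta>" "f q1 s = f q2 s" for s q1 q2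
    using E2[OF that(1-3)] that(4) by simp
  have E3: "\<exists>q\<in>cball q0 \<rho>. f q s = w"
    if s: "s \<in> N" and \<rho>: "\<rho> > 0" and sub: "cball q0 \<rho> \<subseteq> ball 0 \<delta>" and w: "norm (w - f q0 s) \<le> \<rho> / (2 * K)"
    for s q0 \<rho> w
  proof -
    define T where "T q = q - Ai (f q s - w)" for q
    have Tlip: "dist (T x) (T y) \<le> 1/2 * dist x y" if x: "x \<in> cball q0 \<rho>" and y: "y \<in> cball q0 \<rho>" for x y
    proof -
      have "T y - T x = Ai ((f x s - f y s) - A (x - y))"
        unfolding T_def by (simp add: linear_diff[OF linAi] linear_add[OF linAi] AiA algebra_simps)
      moreover have "dist (T x) (T y) = norm (T y - T x)" by (metis dist_commute dist_norm)
      ultimately have "dist (T x) (T y) = norm (Ai ((f x s - f y s) - A (x - y)))" by simp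
      also have "\<dots> \<le> K * norm ((f x s - f y s) - A (x - y))" by (rule K(2))
      also have "\<dots> \<le> K * (norm (x - y) / (2 * K))"
      proof -
        have "x \<in> ball 0 \<delta>" "y \<in> ball 0 \<delta>" using x y sub by auto
        from E1[OF s this] K(1) show ?thesis by (intro mult_left_mono) auto
      qed
      also have "\<dots> = 1/2 * dist x y" using K(1) by (simp add: dist_norm)
      finally show ?thesis .
    qed
    have q0in: "q0 \<in> cball q0 \<rho>" using \<rho> by simp
    have Tmap: "T ` cball q0 \<rho> \<subseteq> cball q0 \<rho>"
    proof
      fix z assume "z \<in> T ` cball q0 \<rho>"
      then obtain q where q: "q \<in> cball q0 \<rho>" and z: "z = T q" by blast
      have "dist q0 (T q0) = norm (Ai (f q0 s - w))" unfolding T_def by (simp add: dist_norm)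
      also have "\<dots> \<le> K * norm (f q0 s - w)" by (rule K(2))
      also have "\<dots> \<le> K * (\<rho> / (2 * K))" using w K(1) by (intro mult_left_mono) (auto simp: norm_minus_commute)
      also have "\<dots> = \<rho> / 2" using K(1) by simp
      finally have d1: "dist q0 (T q0) \<le> \<rho> / 2" .
      have d2: "dist (T q0) (T q) \<le> 1/2 * dist q0 q" by (rule Tlip[OF q0in q])
      have "dist q0 q \<le> \<rho>" using q by simp
      have "dist q0 (T q) \<le> dist q0 (T q0) + dist (T q0) (T q)" by (rule dist_triangle)
      also have "\<dots> \<le> \<rho>" using d1 d2 \<open>dist q0 q \<le> \<rho>\<close> by simp
      finally show "z \<in> cball q0 \<rho>" using z by simp
    qed
    have "\<exists>!q\<in>cball q0 \<rho>. T q = q"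
      by (rule Banach_fix[where c="1/2"])
         (use q0in Tmap Tlip in \<open>auto simp: complete_eq_closed\<close>)
    then obtain q where q: "q \<in> cball q0 \<rho>" "T q = q" by blast
    then have "Ai (f q s - w) = 0" unfolding T_def by simp
    then have "A (Ai (f q s - w)) = 0" by (simp add: linear_0[OF linA])
    then have "f q s = w" by (simp add: AAi)
    with q show ?thesis by blast
  qed
  define U' where "U' = (\<lambda>(q, s). (f q s, s)) ` U"
  define g where "g w s = (SOME q. q \<in> ball 0 \<delta> \<and> f q s = w)" for w s
  have U'_iff: "(w,s) \<in> U' \<longleftrightarrow> s \<in> N \<and> (\<exists>q\<in>ball 0 \<delta>. f q s = w)" for w s
    unfolding U'_def U_def by (auto simp: image_iff)
  have gprop: "g w s \<in> ball 0 \<delta> \<and> f (g w s) s = w" if "(w,s) \<in> U'" for w s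
  proof -
    from that have "\<exists>q. q \<in> ball 0 \<delta> \<and> f q s = w" unfolding U'_iff by blast
    then show ?thesis unfolding g_def by (rule someI_ex)
  qed
  have guniq: "g w s = q" if "q \<in> ball 0 \<delta>" "s \<in> N" "f q s = w" for q s w
  proof -
    have "(w,s) \<in> U'" unfolding U'_iff using that by blast
    from gprop[OF this] that show ?thesis using injf by blast
  qed
  have E4: "\<exists>r>0. \<exists>N1. open N1 \<and> s0 \<in> N1 \<and>
      (\<forall>w s. dist w (f q0 s0) < r \<longrightarrow> s \<in> N1 \<longrightarrow> (w,s) \<in> U' \<and> dist (g w s) q0 \<le> \<epsilon>)"
    if qs0: "(q0,s0) \<in> U" and \<epsilon>: "\<epsilon> > 0" for q0 s0 \<epsilon>
  proof -
    have q0b: "norm q0 < \<delta>" and s0N: "s0 \<in> N" using qs0 unfolding U_def by auto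
    define \<rho> where "\<rho> = min \<epsilon> ((\<delta> - norm q0) / 2)"
    have \<rho>0: "\<rho> > 0" unfolding \<rho>_def using \<epsilon> q0b by simp
    have \<rho>\<epsilon>: "\<rho> \<le> \<epsilon>" unfolding \<rho>_def by simp
    have sub: "cball q0 \<rho> \<subseteq> ball 0 \<delta>"
    proof
      fix x assume "x \<in> cball q0 \<rho>"
      then have "dist q0 x \<le> \<rho>" by simp
      moreover have "norm x \<le> norm q0 + dist q0 x"
        by (metis dist_0_norm dist_commute dist_triangle)
      moreover have "\<rho> \<le> (\<delta> - norm q0) / 2" unfolding \<rho>_def by (rule min.cobounded2)
      ultimately show "x \<in> ball 0 \<delta>" using q0b by simp
    qed
    define r where "r = \<rho> / (4 * K)"
    have r0: "r > 0" unfolding r_def using \<rho>0 K(1) by simp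
    have "\<forall>\<^sub>F p in nhds (q0,s0). dist ((\<lambda>(q,s). f q s) p) ((\<lambda>(q,s). f q s) (q0,s0)) < r"
      by (rule cont_on_nhds[OF Cf UU _ r0]) (use qs0 UsubU in auto)
    then have "\<forall>\<^sub>F p in nhds (q0,s0). dist (f (fst p) (snd p)) (f q0 s0) < r"
      by (simp add: case_prod_unfold)
    then obtain S1 where S1: "open S1" "(q0,s0) \<in> S1" "\<And>p. p \<in> S1 \<Longrightarrow> dist (f (fst p) (snd p)) (f q0 s0) < r"
      unfolding eventually_nhds by blast
    obtain A1 B1 where AB: "open A1" "open B1" "(q0,s0) \<in> A1 \<times> B1" "A1 \<times> B1 \<subseteq> S1"
      using open_prod_elim[OF S1(1,2)] by blast
    define N1 where "N1 = B1 \<inter> N"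
    have N1: "open N1" "s0 \<in> N1" unfolding N1_def using AB A0N(2) s0N by auto
    have main: "(w,s) \<in> U' \<and> dist (g w s) q0 \<le> \<epsilon>" if w: "dist w (f q0 s0) < r" and s: "s \<in> N1" for w s
    proof -
      have sN: "s \<in> N" and sB: "s \<in> B1" using s unfolding N1_def by auto
      have "(q0, s) \<in> S1" using AB sB by blast
      then have d: "dist (f q0 s) (f q0 s0) < r" using S1(3)[of "(q0,s)"] by simp
      have "norm (w - f q0 s) \<le> dist w (f q0 s0) + dist (f q0 s) (f q0 s0)"
        by (metis dist_norm dist_triangle2)
      also have "\<dots> \<le> \<rho> / (2 * K)" using w d unfolding r_def by simp
      finally obtain q where q: "q \<in> cball q0 \<rho>" "f q s = w" using E3[OF sN \<rho>0 sub] by blast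
      have qb: "q \<in> ball 0 \<delta>" using q(1) sub by blast
      have "(w,s) \<in> U'" unfolding U'_iff using sN qb q(2) by blast
      moreover have "g w s = q" by (rule guniq[OF qb sN q(2)])
      moreover have "dist q q0 \<le> \<epsilon>" using q(1) \<rho>\<epsilon> by (simp add: dist_commute)
      ultimately show ?thesis by simp
    qed
    show ?thesis using r0 N1 main by blast
  qed
  have gU: "(g w s, s) \<in> U" and gf: "f (g w s) s = w" if "(w,s) \<in> U'" for w s
    using gprop[OF that] that unfolding U'_iff U_def by auto
  have E4': "\<exists>r>0. \<exists>N1. open N1 \<and> s0 \<in> N1 \<and>
      (\<forall>w s. dist w w0 < r \<longrightarrow> s \<in> N1 \<longrightarrow> (w,s) \<in> U' \<and> dist (g w s) (g w0 s0) \<le> \<epsilon>)"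
    if ws0: "(w0,s0) \<in> U'" and \<epsilon>: "\<epsilon> > 0" for w0 s0 \<epsilon>
    using E4[OF gU[OF ws0] \<epsilon>] gf[OF ws0] by simp
  have openU': "open U'"
  proof (rule open_subopen[THEN iffD2], rule ballI)
    fix x assume x: "x \<in> U'"
    obtain w0 s0 where x0: "x = (w0,s0)" by (cases x)
    have ws0: "(w0,s0) \<in> U'" using x x0 by simp
    obtain r N1 where r: "r > 0" "open N1" "s0 \<in> N1"
      "\<And>w s. dist w w0 < r \<Longrightarrow> s \<in> N1 \<Longrightarrow> (w,s) \<in> U' \<and> dist (g w s) (g w0 s0) \<le> 1"
      using E4'[OF ws0, of 1] by auto
    show "\<exists>T. open T \<and> x \<in> T \<and> T \<subseteq> U'"
    proof (intro exI conjI)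
      show "open (ball w0 r \<times> N1)" using r by (simp add: open_Times)
      show "x \<in> ball w0 r \<times> N1" using x0 r by simp
      show "ball w0 r \<times> N1 \<subseteq> U'"
      proof
        fix y assume y: "y \<in> ball w0 r \<times> N1"
        obtain w s where ye: "y = (w,s)" by (cases y)
        have "dist w0 w < r" "s \<in> N1" using y ye by auto
        then have "dist w w0 < r" by (simp add: dist_commute)
        then show "y \<in> U'" using r(4)[of w s] \<open>s \<in> N1\<close> ye by simp
      qed
    qed
  qed
  have tU': "(0,t) \<in> U'" unfolding U'_iff using tU f0 unfolding U_def by force
  have bijF: "bij_betw (\<lambda>(q, s). (f q s, s)) U U'"
    unfolding bij_betw_def
  proof
    show "inj_on (\<lambda>(q, s). (f q s, s)) U"
    proof (rule inj_onI)
      fix x y assume x: "x \<in> U" and y: "y \<in> U" and e: "(\<lambda>(q, s). (f q s, s)) x = (\<lambda>(q, s). (f q s, s)) y"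
      obtain q1 s1 where x1: "x = (q1,s1)" by (cases x)
      obtain q2 s2 where y2: "y = (q2,s2)" by (cases y)
      from e have "s1 = s2" "f q1 s1 = f q2 s2" using x1 y2 by auto
      moreover have "s1 \<in> N" "q1 \<in> ball 0 \<delta>" "q2 \<in> ball 0 \<delta>" using x y x1 y2 unfolding U_def by auto
      ultimately have "q1 = q2" using injf by blast
      then show "x = y" using x1 y2 \<open>s1 = s2\<close> by simp
    qed
    show "(\<lambda>(q, s). (f q s, s)) ` U = U'" unfolding U'_def ..
  qed
  have Cg: "continuous_on U' (\<lambda>(w,s). g w s)"
    unfolding continuous_on_topological
  proof (intro ballI allI impI)
    fix x B assume x: "x \<in> U'" and B: "open B" "(\<lambda>(w,s). g w s) x \<in> B"
    obtain w0 s0 where x0: "x = (w0,s0)" by (cases x)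
    have ws0: "(w0,s0) \<in> U'" using x x0 by simp
    have gB: "g w0 s0 \<in> B" using B(2) x0 by simp
    obtain e where e: "e > 0" "ball (g w0 s0) e \<subseteq> B"
      using open_contains_ball[THEN iffD1, OF B(1)] gB by blast
    have e2: "e/2 > 0" using e(1) by simp
    obtain r N1 where r: "r > 0" "open N1" "s0 \<in> N1"
      "\<And>w s. dist w w0 < r \<Longrightarrow> s \<in> N1 \<Longrightarrow> (w,s) \<in> U' \<and> dist (g w s) (g w0 s0) \<le> e/2"
      using E4'[OF ws0 e2] by auto
    show "\<exists>A. open A \<and> x \<in> A \<and> (\<forall>y\<in>U'. y \<in> A \<longrightarrow> (\<lambda>(w,s). g w s) y \<in> B)"
    proof (intro exI conjI ballI impI)
      show "open (ball w0 r \<times> N1)" using r by (simp add: open_Times)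
      show "x \<in> ball w0 r \<times> N1" using x0 r by simp
      fix y assume "y \<in> U'" and yb: "y \<in> ball w0 r \<times> N1"
      obtain w s where ye: "y = (w,s)" by (cases y)
      have "dist w0 w < r" "s \<in> N1" using yb ye by auto
      then have y: "y = (w,s)" "dist w w0 < r" "s \<in> N1" using ye by (auto simp: dist_commute)
      then have "dist (g w s) (g w0 s0) < e" using r(4)[of w s] e(1) by simp
      then have "g w s \<in> ball (g w0 s0) e" by (simp add: dist_commute)
      then show "(\<lambda>(w,s). g w s) y \<in> B" using e(2) y by auto
    qed
  qed
  have Cat: "continuous (at w0) (\<lambda>w. g w s0)" if ws0: "(w0,s0) \<in> U'" for w0 s0
    unfolding continuous_at_eps_delta
  proof (intro allI impI)
    fix e :: real assume e: "e > 0"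
    obtain r N1 where r: "r > 0" "open N1" "s0 \<in> N1"
      "\<And>w s. dist w w0 < r \<Longrightarrow> s \<in> N1 \<Longrightarrow> (w,s) \<in> U' \<and> dist (g w s) (g w0 s0) \<le> e/2"
      using E4'[OF ws0, of "e/2"] e by auto
    show "\<exists>d>0. \<forall>x'. dist x' w0 < d \<longrightarrow> dist (g x' s0) (g w0 s0) < e"
      using r e by (intro exI[of _ r]) force
  qed
  have HDg: "((\<lambda>w. g w s0) has_derivative inv (L (g w0 s0) s0)) (at w0)" if ws0: "(w0,s0) \<in> U'" for w0 s0
  proof -
    obtain r N1 where r: "r > 0" "open N1" "s0 \<in> N1"
      "\<And>w s. dist w w0 < r \<Longrightarrow> s \<in> N1 \<Longrightarrow> (w,s) \<in> U' \<and> dist (g w s) (g w0 s0) \<le> 1"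
      using E4'[OF ws0, of 1] by auto
    have qU: "(g w0 s0, s0) \<in> U" by (rule gU[OF ws0])
    show ?thesis
    proof (rule has_derivative_inverse_basic[where T="ball w0 r"])
      show "((\<lambda>x. f x s0) has_derivative L (g w0 s0) s0) (at (g w0 s0))"
        using HL qU UsubU by blast
      have li: "linear (inv (L (g w0 s0) s0))" by (rule linear_inv_bij[OF linL[OF qU] bijL[OF qU]])
      then show "bounded_linear (inv (L (g w0 s0) s0))" by (simp add: linear_conv_bounded_linear)
      show "inv (L (g w0 s0) s0) \<circ> L (g w0 s0) s0 = id" using bijL[OF qU] by (simp add: bij_is_inj)
      show "continuous (at w0) (\<lambda>w. g w s0)" by (rule Cat[OF ws0])
      show "open (ball w0 r)" by simp
      show "w0 \<in> ball w0 r" using r by simp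
      fix z assume "z \<in> ball w0 r"
      then have "(z,s0) \<in> U'" using r by (simp add: dist_commute)
      then show "f (g z s0) s0 = z" by (rule gf)
    qed
  qed
  have Dg: "(\<lambda>x. g x s) differentiable (at w)" if "(w,s) \<in> U'" for w s
    using HDg[OF that] differentiableI by blast
  have Eg: "frechet_derivative (\<lambda>x. g x s) (at w) u = inv (frechet_derivative (\<lambda>x. f x s) (at (g w s))) u"
    if "(w,s) \<in> U'" for w s u
    using fd_eqI[OF HDg[OF that]] unfolding L_def .
  have LB: "bij (frechet_derivative (\<lambda>x. f x s) (at q))" if "(q,s) \<in> U" for q s
    using bijL[OF that] unfolding L_def .
  have Cg0: "relC (enat 0) U' g" using Cg by (simp add: relC_0)
  have gR: "relC (enat (Suc n)) U' g" if "relC (enat (Suc n)) U f" for n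
    by (rule g_relC[OF openU openU' gU LB Cg0 Dg Eg that])
  have RU1: "relC (enat (Suc 0)) U f" by (rule relC_subset[OF R1 UsubU])
  have G1: "relC 1 U' g" using gR[OF RU1] by (simp add: one_enat_def)
  have Gr: "relC r U' g" if "relC r \<U> f" for r
  proof (rule relC_iff_all[THEN iffD2], intro allI impI)
    fix n assume n: "enat n \<le> r"
    show "relC (enat n) U' g"
    proof (cases n)
      case 0 then show ?thesis using Cg0 by simp
    next
      case (Suc m)
      have "relC (enat n) \<U> f" by (rule relC_le[OF that n])
      then have "relC (enat (Suc m)) U f" unfolding Suc by (rule relC_subset[OF _ UsubU])
      then show ?thesis unfolding Suc by (rule gR)
    qed
  qed
  have Gall: "\<forall>r. 2 \<le> r \<longrightarrow> relC r \<U> f \<longrightarrow> relC r U' g"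
    using Gr by blast
  have Ginv: "\<forall>w s. (w, s) \<in> U' \<longrightarrow> (g w s, s) \<in> U \<and> f (g w s) s = w" using gU gf by blast
  show ?thesis
    apply (rule exI[of _ U], rule exI[of _ U'], rule exI[of _ g])
    using openU UsubU tU openU' tU' bijF Ginv G1 Gall by blast
qed

end
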